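(* There are absolute constants $c^*,\kappa>0$ such that for every $k\ge1$, every random variable $Y$ in $[0,1]^k$ with $Y_1\le\dots\le Y_k$ almost surely, and every $s>0$, $$D^{(q)}(r\,|\,Y,\|\cdot\|_\infty,s)\le\frac{\kappa}{k}e^{-r/k}\qquad\text{for all }r\ge c^*k.$$
   Context: $D^{(q)}(r\,|\,Y,\|\cdot\|_\infty,s)=\inf\{(\mathbb E\min_{a\in\mathcal C}\|Y-a\|_\infty^s)^{1/s}:\mathcal C\subset\mathbb R^k\text{ finite},\ \log\#\mathcal C\le r\}$ (natural log). *)

theory Defs
  imports "HOL-Probability.Probability"
begin

text \<open>Vectors of R^k are represented as functions nat => real; only the
coordinates i < k are relevant. A random vector Y is represented by its law,
a probability measure on the product space PiM {..<k} (\<lambda>_. borel).\<close>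

definition linf_dist :: "nat \<Rightarrow> (nat \<Rightarrow> real) \<Rightarrow> (nat \<Rightarrow> real) \<Rightarrow> real" where
  "linf_dist k x a = (MAX i\<in>{..<k}. \<bar>x i - a i\<bar>)"

definition quant_err :: "nat \<Rightarrow> (nat \<Rightarrow> real) measure \<Rightarrow> real \<Rightarrow> (nat \<Rightarrow> real) set \<Rightarrow> real" where
  "quant_err k M s C = (\<integral>x. (MIN a\<in>C. linf_dist k x a) powr s \<partial>M) powr (1 / s)"

definition Dq :: "nat \<Rightarrow> (nat \<Rightarrow> real) measure \<Rightarrow> real \<Rightarrow> real \<Rightarrow> real" where
  "Dq k M s r = Inf {quant_err k M s C | C. finite C \<and> C \<noteq> {} \<and> ln (real (card C)) \<le> r}"

end

theory Submission imports Defs begin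

lemma smono_count:
  fixes h :: "nat \<Rightarrow> nat"
  assumes sm: "\<And>i j. i < j \<Longrightarrow> j < k \<Longrightarrow> h i < h j" and i: "i < k"
  shows "card {z \<in> h ` {..<k}. z < h i} = i"
proof -
  have "{z \<in> h ` {..<k}. z < h i} = h ` {..<i}"
  proof (intro set_eqI iffI)
    fix z assume "z \<in> {z \<in> h ` {..<k}. z < h i}"
    then obtain j where j: "j < k" "z = h j" "h j < h i" by auto
    have "j < i" using sm[of i j] j i by (cases "j < i") (auto simp: not_less order.order_iff_strict)
    then show "z \<in> h ` {..<i}" using j by auto
  next
    fix z assume "z \<in> h ` {..<i}"
    then show "z \<in> {z \<in> h ` {..<k}. z < h i}" using sm i by auto
  qed
  moreover have "inj_on h {..<i}"
  proof (rule inj_onI, rule ccontr)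
    fix a b assume ab: "a \<in> {..<i}" "b \<in> {..<i}" "h a = h b" "a \<noteq> b"
    then consider "a < b" | "b < a" by linarith
    then show False using ab i sm[of a b] sm[of b a] by cases auto
  qed
  ultimately show ?thesis by (simp add: card_image)
qed

definition monoF :: "nat \<Rightarrow> nat \<Rightarrow> (nat \<Rightarrow> nat) set" where
  "monoF k m = {f. (\<forall>i. k \<le> i \<longrightarrow> f i = 0) \<and> (\<forall>i j. i \<le> j \<longrightarrow> j < k \<longrightarrow> f i \<le> f j) \<and> (\<forall>i<k. f i \<le> m)}"

lemma monoF_count: "finite (monoF k m) \<and> card (monoF k m) \<le> (m + k) choose k"
proof -
  define \<phi> where "\<phi> f = (\<lambda>i. f i + i) ` {..<k}" for f :: "nat \<Rightarrow> nat"
  have sm: "\<And>i j. i < j \<Longrightarrow> j < k \<Longrightarrow> f i + i < f j + j" if "f \<in> monoF k m" for f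
  proof -
    fix i j assume ij: "i < j" "j < k"
    have "f i \<le> f j" using that ij unfolding monoF_def by auto
    then show "f i + i < f j + j" using ij by linarith
  qed
  have inj: "inj_on \<phi> (monoF k m)"
  proof (rule inj_onI)
    fix f g assume f: "f \<in> monoF k m" and g: "g \<in> monoF k m" and e: "\<phi> f = \<phi> g"
    show "f = g"
    proof
      fix i show "f i = g i"
      proof (cases "i < k")
        case False then show ?thesis using f g unfolding monoF_def by auto
      next
        case True
        have "g i + i \<in> \<phi> f" using e True unfolding \<phi>_def by auto
        then obtain j where j: "j < k" "g i + i = f j + j" unfolding \<phi>_def by auto
        have "card {z \<in> \<phi> f. z < f j + j} = j"
          unfolding \<phi>_def by (rule smono_count[OF sm[OF f] j(1)])
        moreover have "card {z \<in> \<phi> g. z < g i + i} = i"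
          unfolding \<phi>_def by (rule smono_count[OF sm[OF g] True])
        ultimately have "j = i" using e j by simp
        then show ?thesis using j by simp
      qed
    qed
  qed
  have sub: "\<phi> ` monoF k m \<subseteq> {K\<in>Pow {0..<m+k}. card K = k}"
  proof
    fix A assume "A \<in> \<phi> ` monoF k m"
    then obtain f where f: "f \<in> monoF k m" "A = \<phi> f" by auto
    have "inj_on (\<lambda>i. f i + i) {..<k}"
    proof (rule inj_onI, rule ccontr)
      fix a b assume ab: "a \<in> {..<k}" "b \<in> {..<k}" "f a + a = f b + b" "a \<noteq> b"
      then consider "a < b" | "b < a" by linarith
      then show False using ab sm[OF f(1), of a b] sm[OF f(1), of b a] by cases auto
    qed
    then have "card A = k" using f by (simp add: \<phi>_def card_image)
    moreover have "A \<subseteq> {0..<m+k}" using f unfolding \<phi>_def monoF_def by auto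
    ultimately show "A \<in> {K\<in>Pow {0..<m+k}. card K = k}" by auto
  qed
  have fin: "finite (monoF k m)" by (rule inj_on_finite[OF inj sub]) simp
  have "card (monoF k m) = card (\<phi> ` monoF k m)" using inj by (simp add: card_image)
  also have "\<dots> \<le> card {K\<in>Pow {0..<m+k}. card K = k}" by (rule card_mono[OF _ sub]) simp
  also have "\<dots> = (m + k) choose k" by (simp add: binomial_def)
  finally show ?thesis using fin by simp
qed

lemma fact_bound: "(real k) ^ k \<le> exp (real k) * fact k"
proof -
  have "(real k)^k / fact k \<le> exp (real k)"
  proof -
    have s: "(\<lambda>n. real k ^ n /\<^sub>R fact n) sums exp (real k)" by (rule exp_converges)
    have "sum (\<lambda>n. real k ^ n /\<^sub>R fact n) {k} \<le> suminf (\<lambda>n. real k ^ n /\<^sub>R fact n)"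
      by (rule sum_le_suminf) (use s in \<open>auto simp: sums_iff\<close>)
    then show ?thesis using s by (simp add: sums_iff divide_inverse mult.commute)
  qed
  then show ?thesis by (simp add: divide_le_eq mult.commute)
qed


lemma card_bound:
  fixes k :: nat and t :: real
  assumes k: "k \<ge> 1" and t: "t \<ge> 3"
  defines "m \<equiv> nat \<lceil>real k * exp t / (2 * exp 1)\<rceil>"
  shows "real ((m + k) choose k) \<le> exp (real k * t)"
proof -
  have e1: "exp (1::real) \<ge> 2" using exp_ge_add_one_self[of 1] by simp
  have et: "exp t \<ge> 4 * exp 1"
  proof -
    have eq: "exp t = exp 1 * (exp 1 * exp (t - 2))" by (simp add: exp_add[symmetric])
    have a: "exp (t - 2) \<ge> (2::real)" using t e1 by (smt (verit) exp_le_cancel_iff)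
    have b: "exp 1 * exp (t - 2) \<ge> (2::real) * 2" by (rule mult_mono[OF e1 a]) auto
    show ?thesis unfolding eq using b by simp
  qed
  have kpos: "real k > 0" using k by simp
  have mle: "real m \<le> real k * exp t / (2 * exp 1) + 1"
    unfolding m_def by (simp add: of_nat_nat ceiling_correct)
  have A: "real ((m + k) choose k) * fact k \<le> real (m + k) ^ k"
  proof -
    have "((m + k) choose k) * fact k \<le> (m + k) ^ k" by (rule binomial_fact_pow)
    then have "real (((m + k) choose k) * fact k) \<le> real ((m + k) ^ k)" by (rule of_nat_mono)
    then show ?thesis by (simp only: of_nat_mult of_nat_fact of_nat_power)
  qed
  have B: "real k ^ k \<le> exp (real k) * fact k" by (rule fact_bound)
  have fpos: "(fact k :: real) > 0" by simp
  have "real ((m + k) choose k) * real k ^ k \<le> real ((m + k) choose k) * (exp (real k) * fact k)"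
    using B by (simp add: mult_left_mono)
  also have "\<dots> = exp (real k) * (real ((m + k) choose k) * fact k)" by simp
  also have "\<dots> \<le> exp (real k) * real (m + k) ^ k" using A by (simp add: mult_left_mono)
  finally have C: "real ((m + k) choose k) * real k ^ k \<le> exp (real k) * real (m + k) ^ k" .
  have D: "exp 1 * real (m + k) / real k \<le> exp t"
  proof -
    have "real (m + k) / real k \<le> exp t / (2 * exp 1) + 2"
    proof -
      have "real (m + k) \<le> real k * exp t / (2 * exp 1) + 1 + real k" using mle by simp
      also have "\<dots> \<le> real k * (exp t / (2 * exp 1) + 2)" using k by (simp add: algebra_simps)
      finally show ?thesis using kpos by (simp add: divide_le_eq mult.commute)
    qed
    then have "exp 1 * (real (m + k) / real k) \<le> exp 1 * (exp t / (2 * exp 1) + 2)"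
      by (rule mult_left_mono) simp
    also have "\<dots> = exp t / 2 + 2 * exp 1" by (simp add: field_simps)
    also have "\<dots> \<le> exp t" using et by simp
    finally show ?thesis by simp
  qed
  have "real ((m + k) choose k) * real k ^ k \<le> (exp 1 * real (m + k)) ^ k"
    using C by (simp add: power_mult_distrib exp_of_nat_mult[symmetric])
  also have "\<dots> = (exp 1 * real (m + k) / real k) ^ k * real k ^ k"
    using kpos by (simp add: power_divide)
  also have "\<dots> \<le> exp t ^ k * real k ^ k"
    using D by (intro mult_right_mono power_mono) auto
  finally have "real ((m + k) choose k) \<le> exp t ^ k" using kpos by simp
  also have "\<dots> = exp (real k * t)" by (simp add: exp_of_nat_mult)
  finally show ?thesis .
qed

theorem lemma4:
  shows "\<exists>cstar::real. \<exists>\<kappa>::real. cstar > 0 \<and> \<kappa> > 0 \<and>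
    (\<forall>(k::nat) (M::(nat \<Rightarrow> real) measure) (s::real) (r::real).
       k \<ge> 1 \<longrightarrow> prob_space M \<longrightarrow>
       sets M = sets (PiM {..<k} (\<lambda>_. borel)) \<longrightarrow>
       (AE x in M. (\<forall>i<k. 0 \<le> x i \<and> x i \<le> 1) \<and> (\<forall>i j. i \<le> j \<longrightarrow> j < k \<longrightarrow> x i \<le> x j)) \<longrightarrow>
       s > 0 \<longrightarrow> r \<ge> cstar * real k \<longrightarrow>
       Dq k M s r \<le> \<kappa> / real k * exp (- r / real k))"
proof (intro exI conjI allI impI)
  show "(3::real) > 0" by simp
  show "2 * exp 1 > (0::real)" by simp
  fix k :: nat and M :: "(nat \<Rightarrow> real) measure" and s r :: real
  assume k: "k \<ge> 1" and P: "prob_space M" and "sets M = sets (PiM {..<k} (\<lambda>_. borel))"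
    and AE: "AE x in M. (\<forall>i<k. 0 \<le> x i \<and> x i \<le> 1) \<and> (\<forall>i j. i \<le> j \<longrightarrow> j < k \<longrightarrow> x i \<le> x j)"
    and s: "s > 0" and r: "r \<ge> 3 * real k"
  define t where "t = r / real k"
  have kpos: "real k > 0" using k by simp
  have t3: "t \<ge> 3" using r kpos by (simp add: t_def le_divide_eq)
  have rt: "r = real k * t" using kpos by (simp add: t_def)
  define m where "m = nat \<lceil>real k * exp t / (2 * exp 1)\<rceil>"
  have mge: "real m \<ge> real k * exp t / (2 * exp 1)" unfolding m_def
    by (rule real_nat_ceiling_ge)
  have mpos: "real m > 0"
    proof -
    have "real k * exp t / (2 * exp 1) > 0" using kpos by simp
    then show ?thesis using mge by linarith
  qed
  define C where "C = (\<lambda>f i. real (f i) / real m) ` monoF k m"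
  have cnt: "finite (monoF k m)" "card (monoF k m) \<le> (m + k) choose k" using monoF_count by auto
  have finC: "finite C" using cnt unfolding C_def by simp
  have z: "(\<lambda>_. 0) \<in> monoF k m" unfolding monoF_def by simp
  then have neC: "C \<noteq> {}" unfolding C_def by auto
  have cardC: "real (card C) \<le> exp r"
  proof -
    have "card C \<le> (m + k) choose k" unfolding C_def using cnt card_image_le order_trans by blast
    then have "real (card C) \<le> real ((m + k) choose k)" by simp
    also have "\<dots> \<le> exp (real k * t)" using card_bound[OF k t3] unfolding m_def by simp
    finally show ?thesis using rt by simp
  qed
  have lnC: "ln (real (card C)) \<le> r"
  proof -
    have "card C > 0" using finC neC by (simp add: card_gt_0_iff)
    then show ?thesis using cardC by (metis ln_exp ln_le_cancel_iff of_nat_0_less_iff exp_gt_zero)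
  qed
  define \<delta> where "\<delta> = 1 / real m"
  have dpos: "\<delta> > 0" using mpos by (simp add: \<delta>_def)
  have pt: "(MIN a\<in>C. linf_dist k x a) \<le> \<delta> \<and> 0 \<le> (MIN a\<in>C. linf_dist k x a)"
    if x: "\<forall>i<k. 0 \<le> x i \<and> x i \<le> 1" "\<forall>i j. i \<le> j \<longrightarrow> j < k \<longrightarrow> x i \<le> x j" for x
  proof -
    define f where "f i = (if i < k then nat \<lfloor>x i * real m\<rfloor> else 0)" for i
    have fF: "f \<in> monoF k m"
      unfolding monoF_def
    proof (intro CollectI conjI allI impI)
      fix i j assume "i \<le> j" "j < k"
      then show "f i \<le> f j" using x mpos unfolding f_def
        by (auto intro!: nat_mono floor_mono mult_right_mono)
    next
      fix i assume i: "i < k"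
      have "x i * real m \<le> real m" using x i mpos by (simp add: mult_left_le_one_le)
      then have "\<lfloor>x i * real m\<rfloor> \<le> int m" by (metis floor_mono floor_of_nat)
      then show "f i \<le> m" using i unfolding f_def by simp
    qed (simp add: f_def)
    define a where "a i = real (f i) / real m" for i
    have aC: "a \<in> C" unfolding C_def a_def using fF by auto
    have ld: "linf_dist k x a \<le> \<delta>"
      unfolding linf_dist_def
    proof (rule Max.boundedI)
      show "finite ((\<lambda>i. \<bar>x i - a i\<bar>) ` {..<k})" by simp
      show "(\<lambda>i. \<bar>x i - a i\<bar>) ` {..<k} \<noteq> {}" using k by (auto simp: lessThan_empty_iff)
      fix y assume "y \<in> (\<lambda>i. \<bar>x i - a i\<bar>) ` {..<k}"
      then obtain i where i: "i < k" and yi: "y = \<bar>x i - a i\<bar>" by auto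
      have fl: "real (f i) = of_int \<lfloor>x i * real m\<rfloor>"
        using i x unfolding f_def by simp
      have "of_int \<lfloor>x i * real m\<rfloor> \<le> x i * real m" "x i * real m < of_int \<lfloor>x i * real m\<rfloor> + 1"
        by linarith+
      then have "\<bar>x i * real m - real (f i)\<bar> \<le> 1" using fl by linarith
      moreover have "(x i - a i) * real m = x i * real m - real (f i)" using mpos
        by (simp add: a_def field_simps)
      moreover have "\<bar>(x i - a i) * real m\<bar> = \<bar>x i - a i\<bar> * real m" using mpos
        by (simp add: abs_mult)
      ultimately have "\<bar>x i - a i\<bar> * real m \<le> 1" by simp
      then show "y \<le> \<delta>" using mpos yi by (simp add: \<delta>_def le_divide_eq)
    qed
    have "(MIN a\<in>C. linf_dist k x a) \<le> linf_dist k x a" using finC aC by simp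
    moreover have "0 \<le> (MIN a\<in>C. linf_dist k x a)"
    proof -
      have "\<forall>b\<in>C. 0 \<le> linf_dist k x b"
      proof
        fix b :: "nat \<Rightarrow> real" have "0 \<le> \<bar>x 0 - b 0\<bar>" by simp
        also have "\<dots> \<le> linf_dist k x b" unfolding linf_dist_def using k by (intro Max_ge) auto
        finally show "0 \<le> linf_dist k x b" .
      qed
      then show ?thesis using finC neC by simp
    qed
    ultimately show ?thesis using ld by simp
  qed
  interpret prob_space M by (rule P)
  have I: "(\<integral>x. (MIN a\<in>C. linf_dist k x a) powr s \<partial>M) \<le> (\<integral>x. \<delta> powr s \<partial>M)"
  proof (rule integral_mono_AE')
    show "integrable M (\<lambda>x. \<delta> powr s)" by simp
    show "AE x in M. (MIN a\<in>C. linf_dist k x a) powr s \<le> \<delta> powr s"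
      using AE by eventually_elim (use pt s in \<open>auto intro!: powr_mono2\<close>)
    show "AE x in M. 0 \<le> \<delta> powr s" by simp
  qed
  also have "\<dots> = \<delta> powr s" by (simp add: prob_space)
  finally have I2: "(\<integral>x. (MIN a\<in>C. linf_dist k x a) powr s \<partial>M) \<le> \<delta> powr s" .
  have qe: "quant_err k M s C \<le> \<delta>"
  proof -
    have "quant_err k M s C \<le> (\<delta> powr s) powr (1 / s)"
      unfolding quant_err_def using s I2 by (intro powr_mono2) (auto intro: integral_nonneg)
    also have "\<dots> = \<delta>" using s dpos by (simp add: powr_powr)
    finally show ?thesis .
  qed
  have "Dq k M s r \<le> quant_err k M s C"
    unfolding Dq_def
  proof (rule cInf_lower)
    show "quant_err k M s C \<in> {quant_err k M s C |C. finite C \<and> C \<noteq> {} \<and> ln (real (card C)) \<le> r}"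
      using finC neC lnC by blast
    show "bdd_below {quant_err k M s C |C. finite C \<and> C \<noteq> {} \<and> ln (real (card C)) \<le> r}"
      by (rule bdd_belowI[of _ 0]) (auto simp: quant_err_def)
  qed
  also have "\<dots> \<le> \<delta>" by (rule qe)
  also have "\<delta> \<le> 2 * exp 1 / real k * exp (- r / real k)"
  proof -
    have "exp (- r / real k) = 1 / exp t" by (simp add: t_def exp_minus field_simps)
    moreover have "1 / real m \<le> 2 * exp 1 / (real k * exp t)"
      using mge mpos kpos by (simp add: divide_simps) (simp add: field_simps)
    ultimately show ?thesis by (simp add: \<delta>_def)
  qed
  finally show "Dq k M s r \<le> 2 * exp 1 / real k * exp (- r / real k)" .
qed

end
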